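(* Let $f_1,\ldots,f_k\in\mathbb{R}[X_1,\ldots,X_n]$ with $\deg f_i<d$ for all $i$, and suppose that the origin is not a solution of the system $f_1\ge 0,\ldots,f_k\ge 0$ and that its solution set in $\mathbb{R}^n$ is bounded. Let $D$ be the minimal even integer not less than $kd+1$ and $$g(\varepsilon)=\prod_{1\le i\le k}(f_i+\varepsilon)-\varepsilon^{k+1}\sum_{1\le j\le n}X_j^{D}.$$ Then for all sufficiently small positive values of $\varepsilon$: if the system $f_1\ge 0,\ldots,f_k\ge 0$ has a real solution, then the system of equations $\frac{\partial g(\varepsilon)}{\partial X_1}=\cdots=\frac{\partial g(\varepsilon)}{\partial X_n}=0$ has only finitely many roots in $\mathbb{C}^n$. *)

theory Defs
  imports Complex_Main "HOL-Library.Poly_Mapping"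
begin

text \<open>A monomial is a finitely supported exponent vector nat \<Rightarrow>0 nat; variable j
  (0-based) stands for X_(j+1).\<close>

type_synonym 'a mpoly = "(nat \<Rightarrow>\<^sub>0 nat) \<Rightarrow>\<^sub>0 'a"

definition mconst :: "'a::zero \<Rightarrow> 'a mpoly" where
  "mconst c = Poly_Mapping.single 0 c"

definition mvar :: "nat \<Rightarrow> 'a::{zero,one} mpoly" where
  "mvar j = Poly_Mapping.single (Poly_Mapping.single j 1) 1"

definition mdeg :: "(nat \<Rightarrow>\<^sub>0 nat) \<Rightarrow> nat" where
  "mdeg m = (\<Sum>j\<in>Poly_Mapping.keys m. Poly_Mapping.lookup m j)"

text \<open>deg p < d (with the convention deg 0 = -infinity): every monomial occurring in p
  has total degree < d.\<close>
definition deg_less :: "'a::zero mpoly \<Rightarrow> nat \<Rightarrow> bool" where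
  "deg_less p d \<longleftrightarrow> (\<forall>m\<in>Poly_Mapping.keys p. mdeg m < d)"

definition vars_in :: "nat \<Rightarrow> 'a::zero mpoly \<Rightarrow> bool" where
  "vars_in n p \<longleftrightarrow> (\<forall>m\<in>Poly_Mapping.keys p. Poly_Mapping.keys m \<subseteq> {..<n})"

definition meval :: "real mpoly \<Rightarrow> (nat \<Rightarrow> 'b::{real_algebra_1,comm_ring_1}) \<Rightarrow> 'b" where
  "meval p x = (\<Sum>m\<in>Poly_Mapping.keys p. of_real (Poly_Mapping.lookup p m) * (\<Prod>j\<in>Poly_Mapping.keys m. x j ^ Poly_Mapping.lookup m j))"

definition mpderiv :: "nat \<Rightarrow> 'a::comm_ring_1 mpoly \<Rightarrow> 'a mpoly" where
  "mpderiv j p = (\<Sum>m\<in>Poly_Mapping.keys p.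
      Poly_Mapping.single (m - Poly_Mapping.single j 1) (of_nat (Poly_Mapping.lookup m j) * Poly_Mapping.lookup p m))"

definition min_even_ge :: "nat \<Rightarrow> nat" where
  "min_even_ge N = (LEAST D. even D \<and> N \<le> D)"

end

theory Submission
  imports Defs "HOL-Library.FuncSet"
begin


definition mon :: "nat \<Rightarrow> (nat \<Rightarrow> complex) \<Rightarrow> (nat \<Rightarrow> nat) \<Rightarrow> complex" where
  "mon n z \<alpha> = (\<Prod>l<n. z l ^ \<alpha> l)"

definition tdeg :: "nat \<Rightarrow> (nat \<Rightarrow> nat) \<Rightarrow> nat" where
  "tdeg n \<alpha> = (\<Sum>l<n. \<alpha> l)"

lemma mon_add: "mon n z (\<lambda>l. a l + b l) = mon n z a * mon n z b"
  unfolding mon_def by (simp add: power_add prod.distrib)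

lemma mon_single: "j < n \<Longrightarrow> mon n z (\<lambda>l. if l = j then m else 0) = z j ^ m"
proof -
  assume j: "j < n"
  have "mon n z (\<lambda>l. if l = j then m else 0) = (\<Prod>l<n. if l = j then z j ^ m else 1)"
    unfolding mon_def by (rule prod.cong) auto
  also have "\<dots> = z j ^ m" using j by (simp add: prod.delta)
  finally show ?thesis .
qed

lemma mon_restrict: "mon n z (restrict \<alpha> {..<n}) = mon n z \<alpha>"
  unfolding mon_def by (rule prod.cong) auto

lemma reduce:
  fixes V :: "(nat \<Rightarrow> complex) set" and T :: "nat \<Rightarrow> 't set"
  assumes T: "\<forall>j<n. finite (T j) \<and> (\<forall>t\<in>T j. tdeg n (e j t) < m) \<and>
     (\<forall>z\<in>V. z j ^ m = (\<Sum>t\<in>T j. b j t * mon n z (e j t)))"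
  shows "\<exists>c. \<forall>z\<in>V. mon n z \<alpha> = (\<Sum>\<beta>\<in>PiE {..<n} (\<lambda>_. {..<m}). c \<beta> * mon n z \<beta>)"
proof (induction "tdeg n \<alpha>" arbitrary: \<alpha> rule: less_induct)
  case less
  let ?R = "PiE {..<n} (\<lambda>_. {..<m})"
  show ?case
  proof (cases "\<forall>j<n. \<alpha> j < m")
    case True
    have mem: "restrict \<alpha> {..<n} \<in> ?R" using True by auto
    have fin: "finite ?R" by (simp add: finite_PiE)
    define c where "c = (\<lambda>\<beta>. if \<beta> = restrict \<alpha> {..<n} then (1::complex) else 0)"
    have "\<forall>z\<in>V. mon n z \<alpha> = (\<Sum>\<beta>\<in>?R. c \<beta> * mon n z \<beta>)"
    proof
      fix z
      have "(\<Sum>\<beta>\<in>?R. c \<beta> * mon n z \<beta>) = (\<Sum>\<beta>\<in>?R. if \<beta> = restrict \<alpha> {..<n} then mon n z \<beta> else 0)"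
        unfolding c_def by (rule sum.cong) auto
      also have "\<dots> = mon n z (restrict \<alpha> {..<n})" using fin mem by (simp add: sum.delta)
      also have "\<dots> = mon n z \<alpha>" by (rule mon_restrict)
      finally show "mon n z \<alpha> = (\<Sum>\<beta>\<in>?R. c \<beta> * mon n z \<beta>)" by simp
    qed
    then show ?thesis by blast
  next
    case False
    then obtain j where j: "j < n" "m \<le> \<alpha> j" by (auto simp: not_less)
    define \<gamma> where "\<gamma> = \<alpha>(j := \<alpha> j - m)"
    have fT: "finite (T j)" and dT: "\<forall>t\<in>T j. tdeg n (e j t) < m"
      and eT: "\<forall>z\<in>V. z j ^ m = (\<Sum>t\<in>T j. b j t * mon n z (e j t))" using T j by auto
    have split: "\<alpha> = (\<lambda>l. \<gamma> l + (if l = j then m else 0))"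
      using j unfolding \<gamma>_def by auto
    have tg: "tdeg n \<alpha> = tdeg n \<gamma> + m"
    proof -
      have "tdeg n \<alpha> = (\<Sum>l<n. \<gamma> l + (if l = j then m else 0))"
        unfolding tdeg_def by (subst split) simp
      also have "\<dots> = tdeg n \<gamma> + m" using j by (simp add: sum.distrib tdeg_def)
      finally show ?thesis .
    qed
    have "\<forall>t\<in>T j. \<exists>c. \<forall>z\<in>V. mon n z (\<lambda>l. \<gamma> l + e j t l) =
        (\<Sum>\<beta>\<in>?R. c \<beta> * mon n z \<beta>)"
    proof
      fix t assume t: "t \<in> T j"
      have "tdeg n (\<lambda>l. \<gamma> l + e j t l) = tdeg n \<gamma> + tdeg n (e j t)"
        by (simp add: tdeg_def sum.distrib)
      also have "\<dots> < tdeg n \<alpha>" using dT t tg by auto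
      finally show "\<exists>c. \<forall>z\<in>V. mon n z (\<lambda>l. \<gamma> l + e j t l) = (\<Sum>\<beta>\<in>?R. c \<beta> * mon n z \<beta>)"
        by (rule less)
    qed
    then obtain C where C: "\<forall>t\<in>T j. \<forall>z\<in>V. mon n z (\<lambda>l. \<gamma> l + e j t l) =
        (\<Sum>\<beta>\<in>?R. C t \<beta> * mon n z \<beta>)" by metis
    have "\<forall>z\<in>V. mon n z \<alpha> = (\<Sum>\<beta>\<in>?R. (\<Sum>t\<in>T j. b j t * C t \<beta>) * mon n z \<beta>)"
    proof
      fix z assume z: "z \<in> V"
      have "mon n z \<alpha> = mon n z \<gamma> * z j ^ m"
        by (subst split, subst mon_add) (simp add: mon_single j)
      also have "\<dots> = (\<Sum>t\<in>T j. b j t * mon n z (\<lambda>l. \<gamma> l + e j t l))"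
        using eT z by (simp add: sum_distrib_left mon_add mult.commute mult.left_commute)
      also have "\<dots> = (\<Sum>t\<in>T j. b j t * (\<Sum>\<beta>\<in>?R. C t \<beta> * mon n z \<beta>))"
        using C z by (intro sum.cong) auto
      also have "\<dots> = (\<Sum>\<beta>\<in>?R. (\<Sum>t\<in>T j. b j t * C t \<beta>) * mon n z \<beta>)"
        by (simp add: sum_distrib_left sum_distrib_right mult.assoc sum.swap[of _ "T j"])
      finally show "mon n z \<alpha> = (\<Sum>\<beta>\<in>?R. (\<Sum>t\<in>T j. b j t * C t \<beta>) * mon n z \<beta>)" .
    qed
    then show ?thesis by (intro exI[of _ "\<lambda>\<beta>. \<Sum>t\<in>T j. b j t * C t \<beta>"])
  qed
qed

lemma lin_dep:
  fixes v :: "'i \<Rightarrow> 'r \<Rightarrow> complex"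
  assumes "finite R" "finite I" "card R < card I"
  shows "\<exists>a. (\<exists>i\<in>I. a i \<noteq> 0) \<and> (\<forall>\<beta>\<in>R. (\<Sum>i\<in>I. a i * v i \<beta>) = 0)"
  using assms
proof (induction R arbitrary: I v rule: finite_induct)
  case empty
  then obtain i where "i \<in> I" by fastforce
  then show ?case by (intro exI[of _ "\<lambda>_. 1"]) auto
next
  case (insert \<beta>0 R)
  show ?case
  proof (cases "\<exists>i0\<in>I. v i0 \<beta>0 \<noteq> 0")
    case False
    have "card R < card I" using insert by auto
    then obtain a where a: "\<exists>i\<in>I. a i \<noteq> 0" "\<forall>\<beta>\<in>R. (\<Sum>i\<in>I. a i * v i \<beta>) = 0"
      using insert by blast
    have "(\<Sum>i\<in>I. a i * v i \<beta>0) = 0" using False by simp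
    then show ?thesis using a by auto
  next
    case True
    then obtain i0 where i0: "i0 \<in> I" "v i0 \<beta>0 \<noteq> 0" by blast
    define w where "w = (\<lambda>i \<beta>. v i \<beta> - (v i \<beta>0 / v i0 \<beta>0) * v i0 \<beta>)"
    have "card R < card (I - {i0})" using insert i0 by auto
    then obtain a where a: "\<exists>i\<in>I - {i0}. a i \<noteq> 0" "\<forall>\<beta>\<in>R. (\<Sum>i\<in>I - {i0}. a i * w i \<beta>) = 0"
      using insert.IH[of "I - {i0}" w] insert.prems by auto
    define a' where "a' = a(i0 := - (\<Sum>i\<in>I - {i0}. a i * (v i \<beta>0 / v i0 \<beta>0)))"
    have key: "(\<Sum>i\<in>I. a' i * v i \<beta>) = (\<Sum>i\<in>I - {i0}. a i * w i \<beta>)" for \<beta>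
    proof -
      have "(\<Sum>i\<in>I. a' i * v i \<beta>) = a' i0 * v i0 \<beta> + (\<Sum>i\<in>I - {i0}. a' i * v i \<beta>)"
        using i0 insert.prems by (simp add: sum.remove)
      also have "(\<Sum>i\<in>I - {i0}. a' i * v i \<beta>) = (\<Sum>i\<in>I - {i0}. a i * v i \<beta>)"
        unfolding a'_def by (rule sum.cong) auto
      also have "a' i0 * v i0 \<beta> = - (\<Sum>i\<in>I - {i0}. a i * (v i \<beta>0 / v i0 \<beta>0) * v i0 \<beta>)"
        unfolding a'_def by (simp add: sum_distrib_right)
      finally show ?thesis
        by (simp add: w_def right_diff_distrib sum_subtractf mult.assoc)
    qed
    have "\<forall>\<beta>\<in>insert \<beta>0 R. (\<Sum>i\<in>I. a' i * v i \<beta>) = 0"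
    proof
      fix \<beta> assume "\<beta> \<in> insert \<beta>0 R"
      moreover have "(\<Sum>i\<in>I - {i0}. a i * w i \<beta>0) = 0" using i0 by (simp add: w_def)
      ultimately show "(\<Sum>i\<in>I. a' i * v i \<beta>) = 0" using key a by auto
    qed
    moreover have "\<exists>i\<in>I. a' i \<noteq> 0" using a unfolding a'_def by auto
    ultimately show ?thesis by blast
  qed
qed

lemma finite_V:
  fixes V :: "(nat \<Rightarrow> complex) set" and T :: "nat \<Rightarrow> 't set"
  assumes T: "\<forall>j<n. finite (T j) \<and> (\<forall>t\<in>T j. tdeg n (e j t) < m) \<and>
     (\<forall>z\<in>V. z j ^ m = (\<Sum>t\<in>T j. b j t * mon n z (e j t)))"
    and V0: "\<forall>z\<in>V. \<forall>j\<ge>n. z j = 0"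
  shows "finite V"
proof -
  let ?R = "PiE {..<n} (\<lambda>_. {..<m})"
  define N where "N = card ?R"
  have finR: "finite ?R" by (simp add: finite_PiE)
  have coord: "finite ((\<lambda>z. z j) ` V)" if j: "j < n" for j
  proof -
    have "\<forall>i. \<exists>c. \<forall>z\<in>V. mon n z (\<lambda>l. if l = j then i else 0) = (\<Sum>\<beta>\<in>?R. c \<beta> * mon n z \<beta>)"
      using reduce[OF T] by blast
    then obtain C where C: "\<And>i. \<forall>z\<in>V. mon n z (\<lambda>l. if l = j then i else 0) = (\<Sum>\<beta>\<in>?R. C i \<beta> * mon n z \<beta>)"
      by metis
    have "card ?R < card {..N}" unfolding N_def by simp
    then obtain a where a: "\<exists>i\<in>{..N}. a i \<noteq> 0" "\<forall>\<beta>\<in>?R. (\<Sum>i\<in>{..N}. a i * C i \<beta>) = 0"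
      using lin_dep[OF finR, of "{..N}" C] by auto
    have "(\<lambda>z. z j) ` V \<subseteq> {x. (\<Sum>i\<le>N. a i * x ^ i) = 0}"
    proof clarify
      fix z assume z: "z \<in> V"
      have "(\<Sum>i\<le>N. a i * z j ^ i) = (\<Sum>i\<le>N. a i * (\<Sum>\<beta>\<in>?R. C i \<beta> * mon n z \<beta>))"
        using C z by (intro sum.cong) (auto simp: mon_single[OF j])
      also have "\<dots> = (\<Sum>\<beta>\<in>?R. (\<Sum>i\<le>N. a i * C i \<beta>) * mon n z \<beta>)"
        by (simp add: sum_distrib_left sum_distrib_right mult.assoc sum.swap[of _ "{..N}"])
      also have "\<dots> = 0" using a(2) by simp
      finally show "(\<Sum>i\<le>N. a i * z j ^ i) = 0" .
    qed
    moreover have "finite {x. (\<Sum>i\<le>N. a i * x ^ i) = 0}"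
      using a(1) by (subst polyfun_finite_roots) auto
    ultimately show ?thesis by (rule finite_subset)
  qed
  have "V \<subseteq> (\<lambda>h l. if l < n then h l else 0) ` PiE {..<n} (\<lambda>j. (\<lambda>z. z j) ` V)"
  proof
    fix z assume z: "z \<in> V"
    have "z = (\<lambda>l. if l < n then restrict z {..<n} l else 0)"
      using V0 z by (auto simp: fun_eq_iff)
    moreover have "restrict z {..<n} \<in> PiE {..<n} (\<lambda>j. (\<lambda>z. z j) ` V)" using z by auto
    ultimately show "z \<in> (\<lambda>h l. if l < n then h l else 0) ` PiE {..<n} (\<lambda>j. (\<lambda>z. z j) ` V)"
      by blast
  qed
  moreover have "finite (PiE {..<n} (\<lambda>j. (\<lambda>z. z j) ` V))"
    using coord by (intro finite_PiE) auto
  ultimately show ?thesis using finite_subset by blast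
qed



definition deg_le :: "'a::zero mpoly \<Rightarrow> nat \<Rightarrow> bool" where
  "deg_le p a \<longleftrightarrow> (\<forall>\<mu>\<in>Poly_Mapping.keys p. mdeg \<mu> \<le> a)"

lemma mdeg_superset:
  assumes "finite S" "Poly_Mapping.keys \<mu> \<subseteq> S"
  shows "mdeg \<mu> = (\<Sum>j\<in>S. Poly_Mapping.lookup \<mu> j)"
  unfolding mdeg_def using assms
  by (intro sum.mono_neutral_left) (auto simp: in_keys_iff)

lemma mdeg_add: "mdeg (a + b) = mdeg a + mdeg b"
proof -
  let ?S = "Poly_Mapping.keys a \<union> Poly_Mapping.keys b"
  have "mdeg (a + b) = (\<Sum>j\<in>?S. Poly_Mapping.lookup (a + b) j)"
    using keys_add[of a b] by (intro mdeg_superset) auto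
  also have "\<dots> = (\<Sum>j\<in>?S. Poly_Mapping.lookup a j) + (\<Sum>j\<in>?S. Poly_Mapping.lookup b j)"
    by (simp add: lookup_add sum.distrib)
  also have "\<dots> = mdeg a + mdeg b"
    by (subst (1 2) mdeg_superset[of ?S]) auto
  finally show ?thesis .
qed

lemma mdeg_zero [simp]: "mdeg 0 = 0"
  by (simp add: mdeg_def)

lemma mdeg_single [simp]: "mdeg (Poly_Mapping.single j c) = c"
  by (simp add: mdeg_def)

lemma deg_le_add: "deg_le p a \<Longrightarrow> deg_le q a \<Longrightarrow> deg_le (p + q) a"
  unfolding deg_le_def using keys_add[of p q] by blast

lemma deg_le_mult: "deg_le p a \<Longrightarrow> deg_le q b \<Longrightarrow> deg_le (p * q) (a + b)"
  unfolding deg_le_def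
proof
  fix \<mu> assume "\<forall>\<mu>\<in>Poly_Mapping.keys p. mdeg \<mu> \<le> a" "\<forall>\<mu>\<in>Poly_Mapping.keys q. mdeg \<mu> \<le> b"
    "\<mu> \<in> Poly_Mapping.keys (p * q)"
  moreover obtain x y where "\<mu> = x + y" "x \<in> Poly_Mapping.keys p" "y \<in> Poly_Mapping.keys q"
    using keys_mult[of p q] \<open>\<mu> \<in> Poly_Mapping.keys (p * q)\<close> by blast
  ultimately show "mdeg \<mu> \<le> a + b"
    by (simp add: mdeg_add add_mono)
qed

lemma deg_le_one: "deg_le (1::'a::{zero_neq_one} mpoly) 0"
  by (simp add: deg_le_def)

lemma deg_le_prod:
  fixes F :: "'i \<Rightarrow> 'a::comm_semiring_1 mpoly"
  shows "finite I \<Longrightarrow> (\<forall>i\<in>I. deg_le (F i) a) \<Longrightarrow> deg_le (prod F I) (card I * a)"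
proof (induction I rule: finite_induct)
  case empty
  then show ?case by (simp add: deg_le_one)
next
  case (insert x I)
  have h1: "deg_le (F x) a" using insert.prems by blast
  have h2: "deg_le (prod F I) (card I * a)" using insert.prems insert.IH by blast
  have "deg_le (F x * prod F I) (a + card I * a)" using deg_le_mult[OF h1 h2] .
  moreover have "prod F (insert x I) = F x * prod F I" using insert.hyps by simp
  moreover have "card (insert x I) * a = a + card I * a" using insert.hyps by simp
  ultimately show ?case by metis
qed

lemma vars_in_add: "vars_in n p \<Longrightarrow> vars_in n q \<Longrightarrow> vars_in n (p + q)"
  unfolding vars_in_def using keys_add[of p q] by blast

lemma keys_add_nat: "Poly_Mapping.keys ((a::nat \<Rightarrow>\<^sub>0 nat) + b) = Poly_Mapping.keys a \<union> Poly_Mapping.keys b"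
  by (auto simp: in_keys_iff lookup_add)

lemma vars_in_mult: "vars_in n p \<Longrightarrow> vars_in n q \<Longrightarrow> vars_in n (p * q)"
  unfolding vars_in_def
proof
  fix \<mu> assume "\<forall>\<mu>\<in>Poly_Mapping.keys p. Poly_Mapping.keys \<mu> \<subseteq> {..<n}"
    "\<forall>\<mu>\<in>Poly_Mapping.keys q. Poly_Mapping.keys \<mu> \<subseteq> {..<n}"
    "\<mu> \<in> Poly_Mapping.keys (p * q)"
  moreover obtain x y where "\<mu> = x + y" "x \<in> Poly_Mapping.keys p" "y \<in> Poly_Mapping.keys q"
    using keys_mult[of p q] \<open>\<mu> \<in> Poly_Mapping.keys (p * q)\<close> by blast
  ultimately show "Poly_Mapping.keys \<mu> \<subseteq> {..<n}"
    by (simp add: keys_add_nat)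
qed

lemma vars_in_prod:
  fixes F :: "'i \<Rightarrow> 'a::comm_semiring_1 mpoly"
  shows "finite I \<Longrightarrow> (\<forall>i\<in>I. vars_in n (F i)) \<Longrightarrow> vars_in n (prod F I)"
proof (induction I rule: finite_induct)
  case empty
  then show ?case by (simp add: vars_in_def)
next
  case (insert x I)
  have h1: "vars_in n (F x)" using insert.prems by blast
  have h2: "vars_in n (prod F I)" using insert.prems insert.IH by blast
  have "prod F (insert x I) = F x * prod F I" using insert.hyps by simp
  then show ?case using vars_in_mult[OF h1 h2] by simp
qed

lemma keys_mpderiv:
  "Poly_Mapping.keys (mpderiv j p) \<subseteq>
     {\<nu> - Poly_Mapping.single j 1 | \<nu>. \<nu> \<in> Poly_Mapping.keys p \<and> Poly_Mapping.lookup \<nu> j \<noteq> 0}"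
proof
  fix t assume t0: "t \<in> Poly_Mapping.keys (mpderiv j p)"
  let ?F = "\<lambda>\<nu>. Poly_Mapping.single (\<nu> - Poly_Mapping.single j 1) (of_nat (Poly_Mapping.lookup \<nu> j) * Poly_Mapping.lookup p \<nu>)"
  have "t \<in> Poly_Mapping.keys (sum ?F (Poly_Mapping.keys p))" using t0 unfolding mpderiv_def .
  then have "t \<in> (\<Union>\<nu>\<in>Poly_Mapping.keys p. Poly_Mapping.keys (?F \<nu>))" by (rule subsetD[OF keys_sum])
  then obtain \<nu> where \<nu>: "\<nu> \<in> Poly_Mapping.keys p" and t: "t \<in> Poly_Mapping.keys (?F \<nu>)"
    by (rule UN_E)
  have ne: "of_nat (Poly_Mapping.lookup \<nu> j) * Poly_Mapping.lookup p \<nu> \<noteq> 0"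
    using t by (metis empty_iff keys_single)
  then have "t = \<nu> - Poly_Mapping.single j 1" using t by (metis keys_single singletonD)
  moreover have "Poly_Mapping.lookup \<nu> j \<noteq> 0" using ne by (metis mult_zero_left of_nat_0)
  ultimately show "t \<in> {\<nu> - Poly_Mapping.single j 1 | \<nu>. \<nu> \<in> Poly_Mapping.keys p \<and> Poly_Mapping.lookup \<nu> j \<noteq> 0}"
    using \<nu> by blast
qed

lemma lookup_mpderiv_single:
  fixes p :: "'a::comm_ring_1 mpoly"
  shows "Poly_Mapping.lookup (mpderiv j p) (Poly_Mapping.single j N) =
    of_nat (Suc N) * Poly_Mapping.lookup p (Poly_Mapping.single j (Suc N))"
proof -
  let ?s = "Poly_Mapping.single j (Suc N)"
  have eq: "\<nu> - Poly_Mapping.single j 1 = Poly_Mapping.single j N \<and> Poly_Mapping.lookup \<nu> j \<noteq> 0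
     \<longleftrightarrow> \<nu> = ?s" for \<nu> :: "nat \<Rightarrow>\<^sub>0 nat"
  proof
    assume h: "\<nu> - Poly_Mapping.single j 1 = Poly_Mapping.single j N \<and> Poly_Mapping.lookup \<nu> j \<noteq> 0"
    show "\<nu> = ?s"
    proof (rule poly_mapping_eqI)
      fix l
      have "Poly_Mapping.lookup (\<nu> - Poly_Mapping.single j 1) l = Poly_Mapping.lookup (Poly_Mapping.single j N) l"
        using h by simp
      then show "Poly_Mapping.lookup \<nu> l = Poly_Mapping.lookup ?s l"
        using h by (cases "l = j") (auto simp: lookup_minus lookup_single)
    qed
  next
    assume "\<nu> = ?s"
    then show "\<nu> - Poly_Mapping.single j 1 = Poly_Mapping.single j N \<and> Poly_Mapping.lookup \<nu> j \<noteq> 0"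
      by (auto intro!: poly_mapping_eqI simp: lookup_minus lookup_single when_def)
  qed
  have "Poly_Mapping.lookup (mpderiv j p) (Poly_Mapping.single j N) =
    (\<Sum>\<nu>\<in>Poly_Mapping.keys p. if \<nu> = ?s then of_nat (Poly_Mapping.lookup \<nu> j) * Poly_Mapping.lookup p \<nu> else 0)"
    unfolding mpderiv_def lookup_sum
  proof (rule sum.cong)
    fix \<nu> assume "\<nu> \<in> Poly_Mapping.keys p"
    show "Poly_Mapping.lookup (Poly_Mapping.single (\<nu> - Poly_Mapping.single j 1)
        (of_nat (Poly_Mapping.lookup \<nu> j) * Poly_Mapping.lookup p \<nu>)) (Poly_Mapping.single j N) =
      (if \<nu> = ?s then of_nat (Poly_Mapping.lookup \<nu> j) * Poly_Mapping.lookup p \<nu> else 0)"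
      using eq[of \<nu>] by (auto simp: lookup_single when_def)
  qed simp
  also have "\<dots> = of_nat (Suc N) * Poly_Mapping.lookup p ?s"
    by (simp add: sum.delta in_keys_iff)
  finally show ?thesis .
qed

lemma single_pow:
  "Poly_Mapping.single (Poly_Mapping.single l 1) (1::'a::comm_semiring_1) ^ N =
   Poly_Mapping.single (Poly_Mapping.single l N) 1"
proof (induction N)
  case 0
  then show ?case by simp
next
  case (Suc N)
  have e: "Poly_Mapping.single l 1 + Poly_Mapping.single l N = Poly_Mapping.single l (Suc N)"
    by (simp only: single_add[symmetric] plus_1_eq_Suc)
  have "Poly_Mapping.single (Poly_Mapping.single l 1) (1::'a) ^ Suc N =
    Poly_Mapping.single (Poly_Mapping.single l 1) 1 * Poly_Mapping.single (Poly_Mapping.single l N) 1"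
    using Suc by (simp only: power_Suc)
  also have "\<dots> = Poly_Mapping.single (Poly_Mapping.single l (Suc N)) 1"
    by (simp only: mult_single e mult_1)
  finally show ?case .
qed



lemma meval_split:
  assumes "\<mu> \<in> Poly_Mapping.keys p"
  shows "meval p z = of_real (Poly_Mapping.lookup p \<mu>) * (\<Prod>l\<in>Poly_Mapping.keys \<mu>. z l ^ Poly_Mapping.lookup \<mu> l)
    + (\<Sum>t\<in>Poly_Mapping.keys p - {\<mu>}. of_real (Poly_Mapping.lookup p t) * (\<Prod>l\<in>Poly_Mapping.keys t. z l ^ Poly_Mapping.lookup t l))"
  unfolding meval_def using assms by (simp add: sum.remove)

lemma prod_keys_mon:
  assumes "Poly_Mapping.keys t \<subseteq> {..<n}"
  shows "(\<Prod>l\<in>Poly_Mapping.keys t. z l ^ Poly_Mapping.lookup t l) = mon n z (Poly_Mapping.lookup t)"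
  unfolding mon_def using assms by (intro prod.mono_neutral_left) (auto simp: in_keys_iff)

lemma tdeg_mdeg:
  assumes "Poly_Mapping.keys t \<subseteq> {..<n}"
  shows "tdeg n (Poly_Mapping.lookup t) = mdeg t"
  unfolding tdeg_def using mdeg_superset[of "{..<n}" t] assms by simp

lemma single_diff_one:
  "Poly_Mapping.single j (D::nat) - Poly_Mapping.single j 1 = Poly_Mapping.single j (D - 1)"
  by (rule poly_mapping_eqI) (simp add: lookup_minus lookup_single when_def)

lemma single_eq_single: "(D::nat) \<noteq> 0 \<Longrightarrow> Poly_Mapping.single l D = Poly_Mapping.single j D \<Longrightarrow> l = j"
  by (metis lookup_single_eq lookup_single_not_eq)

lemma main_fin:
  fixes f :: "nat \<Rightarrow> real mpoly" and \<epsilon> :: real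
  assumes polys: "\<forall>i<k. vars_in n (f i)"
    and degs: "\<forall>i<k. deg_less (f i) d"
    and eps: "\<epsilon> \<noteq> 0"
    and D: "k * d + 1 \<le> D" "even D"
  shows "finite {z::nat \<Rightarrow> complex. (\<forall>j\<ge>n. z j = 0) \<and>
     (\<forall>j<n. meval (mpderiv j ((\<Prod>i<k. f i + mconst \<epsilon>) - mconst (\<epsilon> ^ (k + 1)) * (\<Sum>j<n. mvar j ^ D))) z = 0)}"
    (is "finite ?V")
proof -
  define P where "P = (\<Prod>i<k. f i + mconst \<epsilon>)"
  define c where "c = \<epsilon> ^ (k + 1)"
  define Q where "Q = (\<Sum>l<n. Poly_Mapping.single (Poly_Mapping.single l D) c)"
  define G where "G = (\<Prod>i<k. f i + mconst \<epsilon>) - mconst (\<epsilon> ^ (k + 1)) * (\<Sum>j<n. mvar j ^ D)"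
  have c0: "c \<noteq> 0" using eps unfolding c_def by simp
  have D2: "2 \<le> D" using D by (auto elim!: evenE)
  have GPQ: "G = P - Q"
  proof -
    have "mconst (\<epsilon> ^ (k + 1)) * (\<Sum>j<n. mvar j ^ D) =
        (\<Sum>l<n. Poly_Mapping.single 0 c * Poly_Mapping.single (Poly_Mapping.single l D) (1::real))"
      unfolding mconst_def mvar_def c_def single_pow by (simp add: sum_distrib_left)
    also have "\<dots> = Q" unfolding Q_def by (simp add: mult_single)
    finally show ?thesis unfolding G_def P_def by simp
  qed
  have degP: "deg_le P (k * (d - 1))"
  proof -
    have "deg_le (f i + mconst \<epsilon>) (d - 1)" if "i \<in> {..<k}" for i
    proof (rule deg_le_add)
      show "deg_le (f i) (d - 1)" using degs that unfolding deg_less_def deg_le_def by fastforce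
      show "deg_le (mconst \<epsilon>) (d - 1)" by (simp add: deg_le_def mconst_def)
    qed
    then show ?thesis unfolding P_def using deg_le_prod[of "{..<k}"] by fastforce
  qed
  have varsP: "vars_in n P"
  proof -
    have "vars_in n (f i + mconst \<epsilon>)" if "i \<in> {..<k}" for i
    proof (rule vars_in_add)
      show "vars_in n (f i)" using polys that by auto
      show "vars_in n (mconst \<epsilon>)" by (simp add: vars_in_def mconst_def)
    qed
    then show ?thesis unfolding P_def using vars_in_prod[of "{..<k}"] by fastforce
  qed
  have keysQ: "Poly_Mapping.keys Q \<subseteq> {Poly_Mapping.single l D | l. l < n}"
  proof
    fix t assume "t \<in> Poly_Mapping.keys Q"
    then have "t \<in> (\<Union>l\<in>{..<n}. Poly_Mapping.keys (Poly_Mapping.single (Poly_Mapping.single l D) c))"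
      unfolding Q_def by (rule subsetD[OF keys_sum])
    then show "t \<in> {Poly_Mapping.single l D | l. l < n}" by (auto split: if_splits)
  qed
  have lookupQ: "Poly_Mapping.lookup Q (Poly_Mapping.single j D) = c" if j: "j < n" for j
  proof -
    have "Poly_Mapping.lookup Q (Poly_Mapping.single j D) = (\<Sum>l<n. if l = j then c else 0)"
    proof -
      have sD: "(Poly_Mapping.single l D = Poly_Mapping.single j D) = (l = j)" for l
        using single_eq_single[of D l j] D2 by auto
      show ?thesis unfolding Q_def lookup_sum
        by (intro sum.cong) (auto simp: lookup_single when_def sD)
    qed
    also have "\<dots> = c" using j by simp
    finally show ?thesis .
  qed
  have lookupP: "Poly_Mapping.lookup P (Poly_Mapping.single j D) = 0" for j
  proof (rule ccontr)
    assume "Poly_Mapping.lookup P (Poly_Mapping.single j D) \<noteq> 0"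
    then have "Poly_Mapping.single j D \<in> Poly_Mapping.keys P" by (simp add: in_keys_iff)
    then have "D \<le> k * (d - 1)" using degP unfolding deg_le_def by fastforce
    moreover have "k * (d - 1) \<le> k * d" by simp
    ultimately show False using D by linarith
  qed
  define \<mu> where "\<mu> = (\<lambda>j::nat. Poly_Mapping.single j (D - 1))"
  define p where "p = (\<lambda>j. mpderiv j G)"
  have lookup_mu: "Poly_Mapping.lookup (p j) (\<mu> j) = - (of_nat D * c)" if j: "j < n" for j
  proof -
    have "Poly_Mapping.lookup (p j) (\<mu> j) = of_nat (Suc (D - 1)) * Poly_Mapping.lookup G (Poly_Mapping.single j (Suc (D - 1)))"
      unfolding p_def \<mu>_def by (rule lookup_mpderiv_single)
    also have "Suc (D - 1) = D" using D2 by simp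
    finally show ?thesis using lookupP lookupQ[OF j] by (simp add: GPQ lookup_minus)
  qed
  have mu_ne: "Poly_Mapping.lookup (p j) (\<mu> j) \<noteq> 0" if "j < n" for j
    using lookup_mu[OF that] c0 D2 by simp
  have keys_rest: "mdeg t < D - 1 \<and> Poly_Mapping.keys t \<subseteq> {..<n}"
    if j: "j < n" and t: "t \<in> Poly_Mapping.keys (p j) - {\<mu> j}" for j t
  proof -
    obtain \<nu> where \<nu>: "t = \<nu> - Poly_Mapping.single j 1" "\<nu> \<in> Poly_Mapping.keys G" "Poly_Mapping.lookup \<nu> j \<noteq> 0"
      using t keys_mpderiv[of j G] unfolding p_def by blast
    have "\<nu> \<in> Poly_Mapping.keys P \<union> Poly_Mapping.keys Q" using \<nu>(2) keys_diff[of P Q] GPQ by auto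
    moreover have "\<nu> \<notin> Poly_Mapping.keys Q"
    proof
      assume "\<nu> \<in> Poly_Mapping.keys Q"
      then obtain l where l: "\<nu> = Poly_Mapping.single l D" using keysQ by blast
      then have "l = j" using \<nu>(3) by (metis lookup_single_not_eq)
      then have "t = \<mu> j" using \<nu>(1) l single_diff_one[of j D] unfolding \<mu>_def by simp
      then show False using t by simp
    qed
    ultimately have \<nu>P: "\<nu> \<in> Poly_Mapping.keys P" by blast
    have split: "\<nu> = t + Poly_Mapping.single j 1"
      using \<nu>(1,3) by (intro poly_mapping_eqI) (auto simp: lookup_add lookup_minus lookup_single when_def)
    have "mdeg \<nu> = mdeg t + 1" using split by (simp add: mdeg_add)
    moreover have "mdeg \<nu> \<le> k * (d - 1)" using degP \<nu>P unfolding deg_le_def by blast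
    moreover have "k * (d - 1) \<le> k * d" by simp
    ultimately have "mdeg t < D - 1" using D by linarith
    moreover have "Poly_Mapping.keys t \<subseteq> Poly_Mapping.keys \<nu>"
      using split by (auto simp: keys_add_nat)
    moreover have "Poly_Mapping.keys \<nu> \<subseteq> {..<n}" using varsP \<nu>P unfolding vars_in_def by blast
    ultimately show ?thesis by blast
  qed
  define T where "T = (\<lambda>j. Poly_Mapping.keys (p j) - {\<mu> j})"
  define b where "b = (\<lambda>j t. - of_real (Poly_Mapping.lookup (p j) t) / (of_real (Poly_Mapping.lookup (p j) (\<mu> j)) :: complex))"
  have V_eq: "?V = {z. (\<forall>j\<ge>n. z j = 0) \<and> (\<forall>j<n. meval (p j) z = 0)}"
    unfolding p_def G_def by simp
  have Thyp: "\<forall>j<n. finite (T j) \<and> (\<forall>t\<in>T j. tdeg n (Poly_Mapping.lookup t) < D - 1) \<and>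
     (\<forall>z\<in>?V. z j ^ (D - 1) = (\<Sum>t\<in>T j. b j t * mon n z (Poly_Mapping.lookup t)))"
  proof (intro allI impI conjI ballI)
    fix j assume j: "j < n"
    show "finite (T j)" unfolding T_def by simp
    show "tdeg n (Poly_Mapping.lookup t) < D - 1" if "t \<in> T j" for t
      using keys_rest[OF j, of t] that unfolding T_def by (simp add: tdeg_mdeg)
    fix z assume "z \<in> ?V"
    then have z0: "meval (p j) z = 0" using j V_eq by blast
    have muk: "\<mu> j \<in> Poly_Mapping.keys (p j)" using mu_ne[OF j] by (simp add: in_keys_iff)
    have pm: "(\<Prod>l\<in>Poly_Mapping.keys (\<mu> j). z l ^ Poly_Mapping.lookup (\<mu> j) l) = z j ^ (D - 1)"
      using D2 unfolding \<mu>_def by simp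
    let ?a = "(of_real (Poly_Mapping.lookup (p j) (\<mu> j)) :: complex)"
    have a0: "?a \<noteq> 0" using mu_ne[OF j] by simp
    have S: "(\<Sum>t\<in>T j. of_real (Poly_Mapping.lookup (p j) t) * (\<Prod>l\<in>Poly_Mapping.keys t. z l ^ Poly_Mapping.lookup t l))
       = (\<Sum>t\<in>T j. of_real (Poly_Mapping.lookup (p j) t) * mon n z (Poly_Mapping.lookup t))"
      using keys_rest[OF j] unfolding T_def by (intro sum.cong refl) (simp add: prod_keys_mon)
    have "0 = ?a * z j ^ (D - 1) + (\<Sum>t\<in>T j. of_real (Poly_Mapping.lookup (p j) t) * mon n z (Poly_Mapping.lookup t))"
      using z0 meval_split[OF muk, of z] pm S unfolding T_def by simp
    then have "z j ^ (D - 1) = - (\<Sum>t\<in>T j. of_real (Poly_Mapping.lookup (p j) t) * mon n z (Poly_Mapping.lookup t)) / ?a"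
      using a0 by (simp add: field_simps eq_neg_iff_add_eq_0)
    also have "\<dots> = (\<Sum>t\<in>T j. b j t * mon n z (Poly_Mapping.lookup t))"
      unfolding b_def by (simp add: sum_divide_distrib sum_negf[symmetric])
    finally show "z j ^ (D - 1) = (\<Sum>t\<in>T j. b j t * mon n z (Poly_Mapping.lookup t))" .
  qed
  show ?thesis
    by (rule finite_V[OF Thyp]) blast
qed

theorem lemma5p3:
  fixes n k d :: nat and f :: "nat \<Rightarrow> real mpoly"
  assumes polys: "\<forall>i<k. vars_in n (f i)"
    and degs: "\<forall>i<k. deg_less (f i) d"
    and origin: "\<not> (\<forall>i<k. 0 \<le> meval (f i) (\<lambda>_. 0::real))"
    and bdd: "\<exists>B. \<forall>x::nat \<Rightarrow> real. (\<forall>j\<ge>n. x j = 0) \<and> (\<forall>i<k. 0 \<le> meval (f i) x)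
                  \<longrightarrow> (\<forall>j<n. \<bar>x j\<bar> \<le> B)"
  defines "g \<equiv> (\<lambda>\<epsilon>::real. (\<Prod>i<k. f i + mconst \<epsilon>)
                 - mconst (\<epsilon> ^ (k + 1)) * (\<Sum>j<n. mvar j ^ min_even_ge (k * d + 1)))"
  shows "\<exists>\<epsilon>0>0. \<forall>\<epsilon>. 0 < \<epsilon> \<and> \<epsilon> < \<epsilon>0 \<longrightarrow>
           ((\<exists>x::nat \<Rightarrow> real. (\<forall>j\<ge>n. x j = 0) \<and> (\<forall>i<k. 0 \<le> meval (f i) x))
            \<longrightarrow> finite {z :: nat \<Rightarrow> complex. (\<forall>j\<ge>n. z j = 0) \<and>
                        (\<forall>j<n. meval (mpderiv j (g \<epsilon>)) z = 0)})"
proof -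
  define D where "D = min_even_ge (k * d + 1)"
  have Dp: "even D \<and> k * d + 1 \<le> D"
    unfolding D_def min_even_ge_def by (rule LeastI[of _ "2 * (k * d + 1)"]) simp
  show ?thesis
  proof (intro exI[of _ "1::real"] conjI allI impI)
    show "(0::real) < 1" by simp
    fix \<epsilon> :: real assume e: "0 < \<epsilon> \<and> \<epsilon> < 1"
    have "\<epsilon> \<noteq> 0" using e by simp
    then show "finite {z :: nat \<Rightarrow> complex. (\<forall>j\<ge>n. z j = 0) \<and>
                        (\<forall>j<n. meval (mpderiv j (g \<epsilon>)) z = 0)}"
      unfolding g_def D_def[symmetric] using main_fin[OF polys degs _ conjunct2[OF Dp] conjunct1[OF Dp]]
      by blast
  qed
qed

end
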